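(* Let $(\mathbb{K},|\cdot|)$ be an algebraically closed normed field, $f\in\mathbb{K}[z]$ a polynomial of degree $n\ge2$, $\xi\in\mathbb{K}^n$ a root-vector of $f$, $N\ge1$ and $1\le p\le\infty$. Suppose $x^{(0)}\in\mathbb{K}^n$ has pairwise distinct components and \[ E(x^{(0)})=\left\|\frac{x^{(0)}-\xi}{d(x^{(0)})}\right\|_p\le\frac{n(2^{1/n}-1)}{(n-1)^{1/q}+2}. \] Then the $N$th Weierstrass-type iteration $x^{(k+1)}=T^{(N)}(x^{(k)})$ is well-defined and converges to $\xi$ with order of convergence $N+1$, and for all $k\ge0$, \[ \|x^{(k+1)}-\xi\|\preceq\theta\lambda^{(N+1)^k}\|x^{(k)}-\xi\|,\quad \|x^{(k)}-\xi\|\preceq\theta^k\lambda^{((N+1)^k-1)/N}\|x^{(0)}-\xi\|, \] \[ \|x^{(k+1)}-\xi\|\preceq\mu^{N(N+1)^k}\|x^{(k)}-\xi\|,\quad \|x^{(k)}-\xi\|\preceq\mu^{(N+1)^k-1}\|x^{(0)}-\xi\|, \] where $\lambda=\phi_N(E(x^{(0)}))$, $\theta=\psi_N(E(x^{(0)}))$ and $\mu=\phi(E(x^{(0)}))$.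
   Context: $a_0$ is the leading coefficient of $f$. For $1\le p\le\infty$, $\|x\|_p=(\sum_i|x_i|^p)^{1/p}$ (max-norm if $p=\infty$), and $q$ is the conjugate exponent, $1/p+1/q=1$. For $x\in\mathbb{K}^n$, $\|x\|=(|x_1|,\dots,|x_n|)\in\mathbb{R}^n$ and $\preceq$ is the coordinatewise order. $d_i(x)=\min_{j\ne i}|x_i-x_j|$, $d(x)=(d_1(x),\dots,d_n(x))$; for $x\in\mathbb{K}^n$, $y\in\mathbb{R}^n$ with nonzero components, $x/y=(|x_1|/y_1,\dots,|x_n|/y_n)$. A root-vector of $f$ is $\xi\in\mathbb{K}^n$ with $f(z)=a_0\prod_i(z-\xi_i)$ for all $z$. Weierstrass-type maps: $T^{(0)}(x)=x$ on $D_0=\mathbb{K}^n$; $D_{N+1}=\{x\in D_N: x_i\ne T^{(N)}_j(x)\ \forall i\ne j\}$, and for $x\in D_{N+1}$, $T^{(N+1)}_i(x)=x_i-\dfrac{f(x_i)}{a_0\prod_{j\ne i}(x_i-T^{(N)}_j(x))}$. The iteration is well-defined if $x^{(k)}\in D_N$ for all $k$. Real functions: $\omega(t)=\left(1+\frac{t}{(n-1)^{1/p}}\right)^{n-1}$ (with $(n-1)^{1/p}=1$ if $p=\infty$), $\Psi(t)=(1+2t)\omega(t)$, $R$ the unique positive solution of $\Psi(t)=2$, $\phi(t)=\frac{\omega(t)-1}{1-2t\omega(t)}$ on $[0,R]$. On $[0,R]$: $\phi_0\equiv1$, $\omega_N(t)=\left(1+\frac{t\phi_N(t)}{(n-1)^{1/p}}\right)^{n-1}$,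 $\phi_{N+1}(t)=\frac{\omega_N(t)-1}{1-2t\omega_N(t)}$; for $N\ge1$, $\psi_N(t)=1-2t\,\omega_{N-1}(t)$. *)

theory Defs
  imports Complex_Main "HOL-Computational_Algebra.Polynomial" "HOL-Library.Extended_Real"
begin

definition is_absval :: "('a::field \<Rightarrow> real) \<Rightarrow> bool" where
  "is_absval av \<longleftrightarrow> (\<forall>x. 0 \<le> av x) \<and> (\<forall>x. av x = 0 \<longleftrightarrow> x = 0)
     \<and> (\<forall>x y. av (x * y) = av x * av y) \<and> (\<forall>x y. av (x + y) \<le> av x + av y)"

definition alg_closed_field :: "'a::field itself \<Rightarrow> bool" where
  "alg_closed_field _ \<longleftrightarrow> (\<forall>q :: 'a poly. 1 \<le> degree q \<longrightarrow> (\<exists>z. poly q z = 0))"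

text \<open>Vectors of length n are functions on indices 0..n-1. The exponent p ranges over [1,\<infinity>]
  as an extended real; invp p = 1/p (with 1/\<infinity> = 0).\<close>
definition invp :: "ereal \<Rightarrow> real" where
  "invp p = (if p = \<infinity> then 0 else 1 / real_of_ereal p)"

definition pnorm :: "nat \<Rightarrow> ereal \<Rightarrow> (nat \<Rightarrow> real) \<Rightarrow> real" where
  "pnorm n p v = (if p = \<infinity> then Max ((\<lambda>i. \<bar>v i\<bar>) ` {..<n})
                 else (\<Sum>i<n. \<bar>v i\<bar> powr real_of_ereal p) powr (1 / real_of_ereal p))"

definition dist_i :: "('a::field \<Rightarrow> real) \<Rightarrow> nat \<Rightarrow> (nat \<Rightarrow> 'a) \<Rightarrow> nat \<Rightarrow> real" where
  "dist_i av n x i = Min ((\<lambda>j. av (x i - x j)) ` ({..<n} - {i}))"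

definition Efun :: "('a::field \<Rightarrow> real) \<Rightarrow> nat \<Rightarrow> ereal \<Rightarrow> (nat \<Rightarrow> 'a) \<Rightarrow> (nat \<Rightarrow> 'a) \<Rightarrow> real" where
  "Efun av n p \<xi> x = pnorm n p (\<lambda>i. av (x i - \<xi> i) / dist_i av n x i)"

definition is_root_vector :: "'a::field poly \<Rightarrow> (nat \<Rightarrow> 'a) \<Rightarrow> bool" where
  "is_root_vector f \<xi> \<longleftrightarrow> (\<forall>z. poly f z = lead_coeff f * (\<Prod>i<degree f. (z - \<xi> i)))"

fun WT :: "'a::field poly \<Rightarrow> nat \<Rightarrow> (nat \<Rightarrow> 'a) \<Rightarrow> (nat \<Rightarrow> 'a)" where
  "WT f 0 x = x"
| "WT f (Suc N) x = (\<lambda>i. x i - poly f (x i) /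
        (lead_coeff f * (\<Prod>j\<in>{..<degree f} - {i}. (x i - WT f N x j))))"

fun WD :: "'a::field poly \<Rightarrow> nat \<Rightarrow> (nat \<Rightarrow> 'a) \<Rightarrow> bool" where
  "WD f 0 x = True"
| "WD f (Suc N) x = (WD f N x \<and>
        (\<forall>i<degree f. \<forall>j<degree f. i \<noteq> j \<longrightarrow> x i \<noteq> WT f N x j))"

definition omega :: "nat \<Rightarrow> ereal \<Rightarrow> real \<Rightarrow> real" where
  "omega n p t = (1 + t / (real n - 1) powr invp p) ^ (n - 1)"

definition phi :: "nat \<Rightarrow> ereal \<Rightarrow> real \<Rightarrow> real" where
  "phi n p t = (omega n p t - 1) / (1 - 2 * t * omega n p t)"

fun phiN :: "nat \<Rightarrow> ereal \<Rightarrow> nat \<Rightarrow> real \<Rightarrow> real"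
and omegaN :: "nat \<Rightarrow> ereal \<Rightarrow> nat \<Rightarrow> real \<Rightarrow> real" where
  "phiN n p 0 t = 1"
| "phiN n p (Suc N) t = (omegaN n p N t - 1) / (1 - 2 * t * omegaN n p N t)"
| "omegaN n p N t = (1 + t * phiN n p N t / (real n - 1) powr invp p) ^ (n - 1)"

definition psiN :: "nat \<Rightarrow> ereal \<Rightarrow> nat \<Rightarrow> real \<Rightarrow> real" where
  "psiN n p N t = 1 - 2 * t * omegaN n p (N - 1) t"

end

theory Submission
  imports Defs "HOL-Analysis.Analysis"
begin

section \<open>Absolute values\<close>

locale AV =
  fixes av :: "'a::field \<Rightarrow> real"
  assumes absv: "is_absval av"
begin

lemma nonneg[simp]: "0 \<le> av x" using absv by (simp add: is_absval_def)
lemma zero_iff[simp]: "av x = 0 \<longleftrightarrow> x = 0" using absv by (simp add: is_absval_def)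
lemma zero[simp]: "av 0 = 0" using zero_iff by blast
lemma mult: "av (x * y) = av x * av y" using absv by (simp add: is_absval_def)
lemma tri: "av (x + y) \<le> av x + av y" using absv by (simp add: is_absval_def)

lemma one[simp]: "av 1 = 1"
proof -
  have "av 1 = av 1 * av 1" using mult[of 1 1] by simp
  moreover have "av 1 \<noteq> 0" by simp
  ultimately show ?thesis by (metis mult_cancel_left1)
qed

lemma minus[simp]: "av (- x) = av x"
proof -
  have "av (-1) * av (-1) = 1" using mult[of "-1" "-1"] by simp
  hence "av (-1) = 1" using nonneg[of "-1"]
    by (metis linorder_neqE_linordered_idom mult_less_cancel_left1
    mult_less_cancel_left2 order_less_imp_not_less)
  thus ?thesis using mult[of "-1" x] by simp
qed

lemma commute: "av (x - y) = av (y - x)"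
  by (metis minus minus_diff_eq)

lemma inverse: "av (inverse x) = inverse (av x)"
proof (cases "x = 0")
  case False
  have "av x * av (inverse x) = 1" using mult[of x "inverse x"] False by simp
  thus ?thesis using inverse_unique by metis
qed simp

lemma divide: "av (x / y) = av x / av y"
  by (simp add: divide_inverse mult inverse)

lemma prod: "finite S \<Longrightarrow> av (\<Prod>j\<in>S. g j) = (\<Prod>j\<in>S. av (g j))"
  by (induction S rule: finite_induct) (auto simp: mult)

lemma tri_diff: "av (x - z) \<le> av (x - y) + av (y - z)"
  using tri[of "x - y" "y - z"] by simp

lemma rev_tri: "av x - av y \<le> av (x - y)"
  using tri[of "x - y" y] by simp

lemma prod_one_minus:
  assumes "finite S"
  shows "av (\<Prod>j\<in>S. 1 + b j) \<le> (\<Prod>j\<in>S. 1 + av (b j)) \<and>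
         av (1 - (\<Prod>j\<in>S. 1 + b j)) \<le> (\<Prod>j\<in>S. 1 + av (b j)) - 1"
  using assms
proof (induction S rule: finite_induct)
  case empty
  then show ?case by simp
next
  case (insert k S)
  let ?P = "\<Prod>j\<in>S. 1 + b j" and ?Q = "\<Prod>j\<in>S. 1 + av (b j)"
  have Q1: "1 \<le> ?Q" by (rule prod_ge_1) simp
  have e1: "(\<Prod>j\<in>insert k S. 1 + b j) = (1 + b k) * ?P" using insert by simp
  have e2: "(\<Prod>j\<in>insert k S. 1 + av (b j)) = (1 + av (b k)) * ?Q" using insert by simp
  have a1: "av ((1 + b k) * ?P) \<le> (1 + av (b k)) * ?Q"
  proof -
    have "av ((1 + b k) * ?P) = av (1 + b k) * av ?P" by (rule mult)
    also have "\<dots> \<le> (1 + av (b k)) * ?Q"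
      apply (rule mult_mono) using tri[of 1 "b k"] insert.IH by auto
    finally show ?thesis .
  qed
  have eq: "1 - (1 + b k) * ?P = (1 - ?P) + (- (b k * ?P))" by (simp add: algebra_simps)
  have "av (1 - (1 + b k) * ?P) = av ((1 - ?P) + (- (b k * ?P)))" by (simp only: eq)
  also have "\<dots> \<le> av (1 - ?P) + av (- (b k * ?P))" by (rule tri)
  also have "\<dots> = av (1 - ?P) + av (b k) * av ?P" by (simp add: mult)
  also have "\<dots> \<le> (?Q - 1) + av (b k) * ?Q"
    apply (rule add_mono) using insert.IH apply simp
    apply (rule mult_left_mono) using insert.IH by auto
  also have "\<dots> = (1 + av (b k)) * ?Q - 1" by (simp add: algebra_simps)
  finally have c2: "av (1 - (1 + b k) * ?P) \<le> (1 + av (b k)) * ?Q - 1" .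
  show ?case unfolding e1 e2 by (intro conjI a1 c2)
qed

end

section \<open>p-norms\<close>

lemma real_p: assumes "1 \<le> p" "p \<noteq> \<infinity>" shows "1 \<le> real_of_ereal p"
  using assms by (cases p) auto

lemma pnorm_nonneg:
  assumes "1 \<le> p" "1 \<le> n" shows "0 \<le> pnorm n p v"
proof (cases "p = \<infinity>")
  case True
  show ?thesis
  proof (cases "n = 0")
    case False
    hence "\<bar>v 0\<bar> \<le> Max ((\<lambda>i. \<bar>v i\<bar>) ` {..<n})" by (intro Max_ge) auto
    thus ?thesis using True by (simp add: pnorm_def)
  qed (use assms in simp)
qed (simp add: pnorm_def)

lemma pnorm_ge:
  assumes "1 \<le> p" "i < n" shows "\<bar>v i\<bar> \<le> pnorm n p v"
proof (cases "p = \<infinity>")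
  case True
  thus ?thesis using assms by (simp add: pnorm_def)
next
  case False
  define r where "r = real_of_ereal p"
  have r: "1 \<le> r" using assms False unfolding r_def
    using real_p[OF assms(1) False] by simp
  have "\<bar>v i\<bar> = (\<bar>v i\<bar> powr r) powr (1 / r)" using r by (simp add: powr_powr)
  also have "\<dots> \<le> (\<Sum>j<n. \<bar>v j\<bar> powr r) powr (1 / r)"
    apply (rule powr_mono2) using r apply simp apply simp
    apply (rule member_le_sum) using assms by auto
  finally show ?thesis using False by (simp add: pnorm_def r_def)
qed

lemma powr_convex0:
  assumes r: "1 \<le> (r::real)" shows "convex_on {0..} (\<lambda>x. x powr r)"
proof (rule convex_onI)
  fix t x y :: real
  assume t: "0 < t" "t < 1" and xy: "x \<in> {0..}" "y \<in> {0..}"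
  have tr: "s powr r \<le> s" if "0 \<le> s" "s \<le> 1" for s :: real
  proof (cases "s = 0")
    case False
    hence "s powr r \<le> s powr 1" using that r by (intro powr_mono') auto
    thus ?thesis using that by simp
  qed simp
  show "((1 - t) *\<^sub>R x + t *\<^sub>R y) powr r \<le> (1 - t) * x powr r + t * y powr r"
  proof (cases "x = 0")
    case True
    have "(t * y) powr r = t powr r * y powr r" using t xy by (simp add: powr_mult)
    also have "\<dots> \<le> t * y powr r" using tr[of t] t by (intro mult_right_mono) auto
    finally show ?thesis using True by simp
  next
    case x0: False
    show ?thesis
    proof (cases "y = 0")
      case True
      have "((1-t) * x) powr r = (1-t) powr r * x powr r" using t xy by (simp add: powr_mult)
      also have "\<dots> \<le> (1-t) * x powr r" using tr[of "1-t"] t by (intro mult_right_mono) auto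
      finally show ?thesis using True by simp
    next
      case False
      have "convex_on {0<..} (\<lambda>x. x powr r)" using powr_convex r by blast
      from convex_onD[OF this, of t x y] show ?thesis using t xy x0 False by auto
    qed
  qed
qed (simp add: convex_real_interval)

lemma pnorm_le_scaled:
  assumes p: "1 \<le> p" and n: "1 \<le> n" and c: "0 \<le> c" and le: "\<And>i. i < n \<Longrightarrow> \<bar>v i\<bar> \<le> c * \<bar>w i\<bar>"
  shows "pnorm n p v \<le> c * pnorm n p w"
proof (cases "p = \<infinity>")
  case True
  have "\<bar>v i\<bar> \<le> c * Max ((\<lambda>i. \<bar>w i\<bar>) ` {..<n})" if "i < n" for i
  proof -
    have "\<bar>w i\<bar> \<le> Max ((\<lambda>i. \<bar>w i\<bar>) ` {..<n})" using that by (intro Max_ge) auto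
    thus ?thesis using le[OF that] c by (meson mult_left_mono order_trans)
  qed
  thus ?thesis using True n unfolding pnorm_def by (auto intro!: Max.boundedI simp: lessThan_empty_iff)
next
  case False
  define r where "r = real_of_ereal p"
  have r: "1 \<le> r" using real_p[OF p False] by (simp add: r_def)
  have "(\<Sum>i<n. \<bar>v i\<bar> powr r) \<le> (\<Sum>i<n. (c * \<bar>w i\<bar>) powr r)"
    apply (rule sum_mono) apply (rule powr_mono2) using r le by auto
  also have "\<dots> = c powr r * (\<Sum>i<n. \<bar>w i\<bar> powr r)"
    using c by (simp add: powr_mult sum_distrib_left)
  finally have "(\<Sum>i<n. \<bar>v i\<bar> powr r) powr (1/r) \<le> (c powr r * (\<Sum>i<n. \<bar>w i\<bar> powr r)) powr (1/r)"
    using r by (intro powr_mono2) (auto intro: sum_nonneg)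
  also have "\<dots> = (c powr r) powr (1/r) * (\<Sum>i<n. \<bar>w i\<bar> powr r) powr (1/r)"
    using c by (simp add: powr_mult sum_nonneg)
  also have "(c powr r) powr (1/r) = c" using r c by (simp add: powr_powr)
  finally show ?thesis using False by (simp add: pnorm_def r_def)
qed

lemma holder_mean:
  assumes p: "1 \<le> p" and n: "2 \<le> n" and i: "i < n" and v: "\<And>j. 0 \<le> v j"
  shows "(\<Sum>j\<in>{..<n}-{i}. v j) \<le> (real n - 1) * pnorm n p v / ((real n - 1) powr invp p)"
proof -
  define S where "S = {..<n}-{i}"
  have cS: "card S = n - 1" using i by (simp add: S_def)
  have fS: "finite S" by (simp add: S_def)
  have K: "real (card S) = real n - 1" using cS n by simp
  have K1: "1 \<le> real n - 1" using n by simp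
  show ?thesis
  proof (cases "p = \<infinity>")
    case True
    have "(\<Sum>j\<in>S. v j) \<le> (\<Sum>j\<in>S. pnorm n p v)"
      apply (rule sum_mono) using pnorm_ge[OF p, of _ n v] v by (auto simp: S_def)
    also have "\<dots> = (real n - 1) * pnorm n p v" using K by simp
    finally show ?thesis using True K1 by (simp add: invp_def S_def)
  next
    case False
    define r where "r = real_of_ereal p"
    have r: "1 \<le> r" using real_p[OF p False] by (simp add: r_def)
    define P where "P = (\<Sum>j<n. \<bar>v j\<bar> powr r)"
    have P0: "0 \<le> P" by (simp add: P_def sum_nonneg)
    have pn: "pnorm n p v = P powr (1/r)" using False by (simp add: pnorm_def P_def r_def)
    define m where "m = (\<Sum>j\<in>S. (1 / real (card S)) *\<^sub>R v j)"
    have m0: "0 \<le> m" using v by (simp add: m_def sum_nonneg)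
    have Sne: "S \<noteq> {}" using cS n by auto
    have "m powr r \<le> (\<Sum>j\<in>S. (1 / real (card S)) * v j powr r)"
      unfolding m_def
      apply (rule convex_on_sum[OF fS Sne powr_convex0[OF r]])
      using Sne fS v by auto
    also have "\<dots> = (1 / real (card S)) * (\<Sum>j\<in>S. v j powr r)" by (simp add: sum_distrib_left)
    also have "\<dots> \<le> (1 / real (card S)) * P"
      apply (rule mult_left_mono) unfolding P_def using v
      by (auto simp: S_def intro!: sum_mono2)
    finally have mr: "m powr r \<le> P / real (card S)" by simp
    have "m = (m powr r) powr (1/r)" using m0 r by (simp add: powr_powr)
    also have "\<dots> \<le> (P / real (card S)) powr (1/r)" using mr r m0 by (intro powr_mono2) auto
    also have "\<dots> = P powr (1/r) / real (card S) powr (1/r)" using P0 by (simp add: powr_divide)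
    finally have "m \<le> pnorm n p v / (real n - 1) powr invp p"
      using pn K False by (simp add: invp_def r_def)
    moreover have "(\<Sum>j\<in>S. v j) = (real n - 1) * m"
      using K K1 by (simp add: m_def sum_distrib_left)
    moreover have "(real n - 1) * m \<le> (real n - 1) * (pnorm n p v / (real n - 1) powr invp p)"
      by (rule mult_left_mono) (use K1 calculation in auto)
    ultimately have "(\<Sum>j\<in>S. v j) \<le> (real n - 1) * (pnorm n p v / (real n - 1) powr invp p)"
      by simp
    thus ?thesis unfolding S_def by simp
  qed
qed

lemma HA:
  assumes p: "1 \<le> p" and n: "2 \<le> n" and i: "i < n" and c: "0 \<le> c" and v: "\<And>j. 0 \<le> v j"
  shows "(\<Prod>j\<in>{..<n}-{i}. 1 + c * v j) \<le> (1 + c * pnorm n p v / ((real n - 1) powr invp p)) ^ (n - 1)"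
proof -
  define S where "S = {..<n}-{i}"
  define a where "a = (real n - 1) powr invp p"
  have cS: "card S = n - 1" using i by (simp add: S_def)
  have fS: "finite S" by (simp add: S_def)
  have K: "real (card S) = real n - 1" using cS n by simp
  have K1: "1 \<le> real n - 1" using n by simp
  have Sne: "S \<noteq> {}" using cS n by auto
  define G where "G = (\<Prod>j\<in>S. 1 + c * v j)"
  have G1: "1 \<le> G" unfolding G_def by (rule prod_ge_1) (use c v in auto)
  have "G powr (1 / card S) \<le> (\<Sum>j\<in>S. (1 + c * v j) / card S)"
    unfolding G_def by (rule arith_geom_mean[OF fS Sne]) (use c v in auto)
  also have "\<dots> = 1 + c * ((\<Sum>j\<in>S. v j) / card S)"
    using K K1 by (simp add: sum_divide_distrib[symmetric] sum.distrib sum_distrib_left field_simps)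
  also have "\<dots> \<le> 1 + c * (pnorm n p v / a)"
  proof -
    have "(\<Sum>j\<in>S. v j) \<le> (real n - 1) * pnorm n p v / a"
      unfolding S_def a_def by (rule holder_mean[OF p n i v])
    hence "(\<Sum>j\<in>S. v j) \<le> real (card S) * (pnorm n p v / a)" using K by simp
    hence "(\<Sum>j\<in>S. v j) / card S \<le> pnorm n p v / a" using K K1 by (simp add: divide_le_eq mult.commute)
    from mult_left_mono[OF this c] show ?thesis by simp
  qed
  finally have g: "G powr (1 / card S) \<le> 1 + c * (pnorm n p v / a)" .
  have "G = (G powr (1 / card S)) powr (card S)" using G1 Sne fS by (simp add: powr_powr)
  also have "\<dots> = (G powr (1 / card S)) ^ (card S)" using G1 by (simp add: powr_realpow)
  also have "\<dots> \<le> (1 + c * (pnorm n p v / a)) ^ (card S)" using g by (intro power_mono) auto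
  finally show ?thesis using cS by (simp add: G_def S_def a_def)
qed

section \<open>Real functions\<close>

declare phiN.simps(2) [simp del] omegaN.simps [simp del]

lemma conv_pow:
  fixes x \<sigma> :: real
  assumes "0 \<le> \<sigma>" "\<sigma> \<le> 1" "0 \<le> x"
  shows "(1 + \<sigma> * x) ^ K - 1 \<le> \<sigma> * ((1 + x) ^ K - 1) \<and> (1 + \<sigma> * x) ^ K \<le> (1 + x) ^ K"
proof (induction K)
  case 0 then show ?case using assms by simp
next
  case (Suc K)
  define A where "A = (1 + \<sigma> * x) ^ K"
  define B where "B = (1 + x) ^ K"
  have AB: "A - 1 \<le> \<sigma> * (B - 1)" "A \<le> B" using Suc by (auto simp: A_def B_def)
  have sx: "\<sigma> * x \<le> x" using assms by (simp add: mult_left_le_one_le)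
  have A0: "0 \<le> A" using assms by (simp add: A_def)
  have "(1 + \<sigma> * x) * A - 1 = (A - 1) + \<sigma> * x * A" by (simp add: algebra_simps)
  also have "\<dots> \<le> \<sigma> * (B - 1) + \<sigma> * x * B"
    using AB assms by (intro add_mono mult_left_mono) auto
  also have "\<dots> = \<sigma> * ((1 + x) * B - 1)" by (simp add: algebra_simps)
  finally have 1: "(1 + \<sigma> * x) * A - 1 \<le> \<sigma> * ((1 + x) * B - 1)" .
  have 2: "(1 + \<sigma> * x) * A \<le> (1 + x) * B" using AB sx A0 assms by (intro mult_mono) auto
  show ?case using 1 2 by (simp add: A_def B_def)
qed

locale RF =
  fixes n :: nat and p :: ereal
  assumes n2: "2 \<le> n" and p1: "1 \<le> p"
begin

definition "aa = (real n - 1) powr invp p"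
definition "valid t \<longleftrightarrow> 0 \<le> t \<and> (1 + 2 * t) * omega n p t < 2"

lemma aa_ge1: "1 \<le> aa"
proof -
  have "0 \<le> invp p" unfolding invp_def using p1
    by (cases p) auto
  thus ?thesis unfolding aa_def using n2 by (intro ge_one_powr_ge_zero) auto
qed

lemma omegaN_eq: "omegaN n p m t = (1 + t * phiN n p m t / aa) ^ (n - 1)"
  by (simp add: aa_def omegaN.simps)

lemma omega_eq: "omega n p t = (1 + t / aa) ^ (n - 1)"
  by (simp add: aa_def omega_def)

lemma omega0: "omegaN n p 0 t = omega n p t"
  by (simp add: omega_def omegaN.simps)

lemma phi1: "phiN n p (Suc 0) t = phi n p t"
  by (simp add: phi_def omega_def phiN.simps omegaN.simps)

lemma phiSuc: "phiN n p (Suc m) t = (omegaN n p m t - 1) / (1 - 2 * t * omegaN n p m t)"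
  by (simp add: phiN.simps)

lemma valid_basic:
  assumes "valid t"
  shows "0 \<le> t" "1 \<le> omega n p t" "2 * t * omega n p t < 1" "0 \<le> phi n p t" "phi n p t < 1"
proof -
  show t0: "0 \<le> t" using assms by (simp add: valid_def)
  show w1: "1 \<le> omega n p t" unfolding omega_eq using t0 aa_ge1 by simp
  have v: "(1 + 2 * t) * omega n p t < 2" using assms by (simp add: valid_def)
  show w2: "2 * t * omega n p t < 1" using v w1 by (simp add: algebra_simps)
  show "0 \<le> phi n p t" unfolding phi_def using w1 w2 by simp
  show "phi n p t < 1" unfolding phi_def using w1 w2 v by (simp add: algebra_simps divide_less_eq)
qed

lemma valid_mono:
  assumes "valid E" "0 \<le> t" "t \<le> E" shows "valid t"
proof -
  have "omega n p t \<le> omega n p E" unfolding omega_eq using assms aa_ge1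
    by (intro power_mono) (auto simp: divide_right_mono)
  moreover have "0 \<le> omega n p t" unfolding omega_eq using assms aa_ge1 by simp
  ultimately have "(1 + 2 * t) * omega n p t \<le> (1 + 2 * E) * omega n p E"
    using assms by (intro mult_mono) auto
  thus ?thesis using assms by (simp add: valid_def)
qed

lemma RF1:
  assumes "valid t"
  shows "0 \<le> phiN n p m t \<and> phiN n p m t \<le> phi n p t ^ m \<and> 1 \<le> omegaN n p m t \<and>
    omegaN n p m t \<le> omega n p t \<and> omegaN n p m t - 1 \<le> phiN n p m t * (omega n p t - 1) \<and>
    0 < 1 - 2 * t * omegaN n p m t"
proof (induction m)
  case 0
  then show ?case using valid_basic[OF assms] by (simp add: omega0[symmetric])
next
  case (Suc m)
  note vb = valid_basic[OF assms]
  let ?w = "omegaN n p m t" and ?f = "phiN n p m t" and ?W = "omega n p t"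
  have f0: "0 \<le> phiN n p (Suc m) t" using Suc by (simp add: phiSuc)
  have den: "1 - 2 * t * ?W \<le> 1 - 2 * t * ?w" using Suc vb by (simp add: mult_left_mono)
  have "phiN n p (Suc m) t \<le> (?f * (?W - 1)) / (1 - 2 * t * ?W)"
    using Suc vb den by (simp only: phiSuc) (intro frac_le, auto)
  also have "\<dots> = ?f * phi n p t" by (simp add: phi_def)
  also have "\<dots> \<le> phi n p t ^ m * phi n p t" using Suc vb by (intro mult_right_mono) auto
  finally have f1: "phiN n p (Suc m) t \<le> phi n p t ^ Suc m" by (simp add: mult.commute)
  have fle1: "phiN n p (Suc m) t \<le> 1"
    using f1 vb by (meson less_imp_le order_trans power_le_one)
  have cp: "(1 + phiN n p (Suc m) t * (t / aa)) ^ (n - 1) - 1 \<le> phiN n p (Suc m) t * ((1 + t / aa) ^ (n - 1) - 1)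
      \<and> (1 + phiN n p (Suc m) t * (t / aa)) ^ (n - 1) \<le> (1 + t / aa) ^ (n - 1)"
    using conv_pow[OF f0 fle1, of "t / aa" "n - 1"] vb aa_ge1 by simp
  have e: "omegaN n p (Suc m) t = (1 + phiN n p (Suc m) t * (t / aa)) ^ (n - 1)"
    using omegaN_eq[of "Suc m" t] by (metis mult.commute times_divide_eq_right)
  have w1: "1 \<le> omegaN n p (Suc m) t" unfolding e using f0 vb aa_ge1 by (intro one_le_power) simp
  have w2: "omegaN n p (Suc m) t \<le> ?W" using cp e omega_eq by simp
  have w3: "omegaN n p (Suc m) t - 1 \<le> phiN n p (Suc m) t * (?W - 1)" using cp e omega_eq by simp
  have "1 - 2 * t * ?W \<le> 1 - 2 * t * omegaN n p (Suc m) t" using w2 vb by (simp add: mult_left_mono)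
  hence w4: "0 < 1 - 2 * t * omegaN n p (Suc m) t" using vb by simp
  show ?case using f0 f1 w1 w2 w3 w4 by blast
qed

end

context RF begin

lemma RF2:
  assumes vE: "valid E" and s: "0 \<le> s" "s \<le> 1" and t: "0 \<le> t" "t \<le> s * E"
  shows "phiN n p m t \<le> s ^ m * phiN n p m E \<and>
         omegaN n p m t - 1 \<le> s ^ (Suc m) * (omegaN n p m E - 1)"
proof -
  have E0: "0 \<le> E" using vE by (simp add: valid_def)
  have tE: "t \<le> E" using t s E0 by (meson mult_left_le_one_le order_trans)
  have vt: "valid t" using valid_mono[OF vE t(1) tE] .
  note R1t = RF1[OF vt] and R1E = RF1[OF vE]
  show ?thesis
  proof (induction m)
    case 0
    have "t / aa \<le> s * (E / aa)" using t aa_ge1 by (simp add: divide_right_mono)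
    hence "(1 + t / aa) ^ (n - 1) \<le> (1 + s * (E / aa)) ^ (n - 1)"
      using t aa_ge1 by (intro power_mono) auto
    moreover have "(1 + s * (E / aa)) ^ (n - 1) - 1 \<le> s * ((1 + E / aa) ^ (n - 1) - 1)"
      using conv_pow[of s "E / aa" "n - 1"] s E0 aa_ge1 by simp
    ultimately show ?case by (simp add: omega0 omega_eq)
  next
    case (Suc m)
    let ?wt = "omegaN n p m t" and ?wE = "omegaN n p m E"
    have wt1: "1 \<le> ?wt" "1 \<le> ?wE" using R1t R1E by auto
    have sm: "s ^ Suc m \<le> 1" using s by (intro power_le_one)
    have wle: "?wt \<le> ?wE"
    proof -
      have "s ^ Suc m * (?wE - 1) \<le> ?wE - 1" using sm wt1 s by (intro mult_left_le_one_le) auto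
      thus ?thesis using Suc by simp
    qed
    have dE: "0 < 1 - 2 * E * ?wE" using R1E by blast
    have den: "1 - 2 * E * ?wE \<le> 1 - 2 * t * ?wt"
      using tE wle t wt1 by (simp add: mult_mono)
    have f: "phiN n p (Suc m) t \<le> s ^ Suc m * phiN n p (Suc m) E"
    proof -
      have "phiN n p (Suc m) t = (?wt - 1) / (1 - 2 * t * ?wt)" by (rule phiSuc)
      also have "\<dots> \<le> (s ^ Suc m * (?wE - 1)) / (1 - 2 * E * ?wE)"
        using Suc wt1 dE den by (intro frac_le) auto
      also have "\<dots> = s ^ Suc m * phiN n p (Suc m) E" by (simp add: phiSuc)
      finally show ?thesis .
    qed
    have fE0: "0 \<le> phiN n p (Suc m) E" "0 \<le> phiN n p (Suc m) t" using R1E R1t by blast+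
    have "t * phiN n p (Suc m) t \<le> (s * E) * (s ^ Suc m * phiN n p (Suc m) E)"
      using t f fE0 by (intro mult_mono) auto
    hence tf: "t * phiN n p (Suc m) t / aa \<le> s ^ Suc (Suc m) * (E * phiN n p (Suc m) E / aa)"
      using aa_ge1 by (simp add: divide_right_mono algebra_simps)
    have ss: "0 \<le> s ^ Suc (Suc m)" "s ^ Suc (Suc m) \<le> 1"
      using s by (simp, intro power_le_one, auto)
    have X0: "0 \<le> E * phiN n p (Suc m) E / aa" using E0 fE0 aa_ge1 by simp
    have "(1 + t * phiN n p (Suc m) t / aa) ^ (n - 1) \<le> (1 + s ^ Suc (Suc m) * (E * phiN n p (Suc m) E / aa)) ^ (n - 1)"
      using tf t fE0 aa_ge1 by (intro power_mono) auto
    moreover have "(1 + s ^ Suc (Suc m) * (E * phiN n p (Suc m) E / aa)) ^ (n - 1) - 1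
        \<le> s ^ Suc (Suc m) * ((1 + E * phiN n p (Suc m) E / aa) ^ (n - 1) - 1)"
      by (rule conjunct1[OF conv_pow[OF ss(1) ss(2) X0]])
    ultimately show ?case using f by (simp add: omegaN_eq[of "Suc m"])
  qed
qed

lemma RF2w:
  assumes vE: "valid E" and t: "0 \<le> t" "t \<le> E"
  shows "omegaN n p m t \<le> omegaN n p m E"
proof -
  have "omegaN n p m t - 1 \<le> 1 ^ Suc m * (omegaN n p m E - 1)"
    using RF2[OF vE, of 1 t m] t by simp
  thus ?thesis by simp
qed

end

locale WS = AV av + RF "degree f" p
  for av :: "'a::field \<Rightarrow> real" and f :: "'a poly" and p +
  fixes \<xi> :: "nat \<Rightarrow> 'a"
  assumes root: "is_root_vector f \<xi>"
begin

abbreviation "nn \<equiv> degree f"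
definition "uu x j = \<bar>av (x j - \<xi> j) / dist_i av nn x j\<bar>"
definition "dst x \<longleftrightarrow> (\<forall>i<nn. \<forall>j<nn. i \<noteq> j \<longrightarrow> x i \<noteq> x j)"

lemma nn2: "2 \<le> nn" using n2 .

lemma pos: "z \<noteq> 0 \<Longrightarrow> 0 < av z" using nonneg[of z] zero_iff[of z] by linarith

lemma Efun_eq: "Efun av nn p \<xi> x = pnorm nn p (uu x)"
  unfolding Efun_def pnorm_def uu_def by simp

lemma D1: assumes "dst x" "i < nn" shows "0 < dist_i av nn x i"
proof -
  have "(if i = 0 then 1 else 0) \<in> {..<nn} - {i}" using nn2 assms(2) by auto
  hence ne: "{..<nn} - {i} \<noteq> {}" by blast
  have "0 < av (x i - x j)" if "j \<in> {..<nn} - {i}" for j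
    using that assms by (intro pos) (auto simp: dst_def)
  thus ?thesis unfolding dist_i_def using ne by (auto simp: Min_gr_iff)
qed

lemma D2: assumes "i < nn" "j < nn" "j \<noteq> i" shows "dist_i av nn x i \<le> av (x i - x j)"
  unfolding dist_i_def using assms by (intro Min_le) auto

lemma U0: "0 \<le> uu x j" by (simp add: uu_def)

lemma U1: "j < nn \<Longrightarrow> uu x j \<le> Efun av nn p \<xi> x"
  using pnorm_ge[OF p1, of j nn "uu x"] by (simp add: Efun_eq U0)

lemma U2: "dst x \<Longrightarrow> j < nn \<Longrightarrow> av (x j - \<xi> j) = uu x j * dist_i av nn x j"
  using D1[of x j] by (simp add: uu_def)

lemma U3: assumes "dst x" "i < nn" "j < nn" "i \<noteq> j"
  shows "av (x j - \<xi> j) \<le> uu x j * av (x i - x j)"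
proof -
  have "dist_i av nn x j \<le> av (x j - x i)" using D2 assms by auto
  hence "uu x j * dist_i av nn x j \<le> uu x j * av (x i - x j)"
    using U0 commute by (metis mult_left_mono)
  thus ?thesis using U2 assms by simp
qed

lemma lc: "lead_coeff f \<noteq> 0" using nn2 by auto

lemma poly_split:
  assumes "i < nn"
  shows "poly f z = lead_coeff f * ((z - \<xi> i) * (\<Prod>j\<in>{..<nn}-{i}. z - \<xi> j))"
proof -
  have "poly f z = lead_coeff f * (\<Prod>j<nn. z - \<xi> j)" using root by (simp add: is_root_vector_def)
  also have "(\<Prod>j<nn. z - \<xi> j) = (z - \<xi> i) * (\<Prod>j\<in>{..<nn}-{i}. z - \<xi> j)"
    using assms by (simp add: prod.remove)
  finally show ?thesis .
qed

lemma stepA: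
  assumes dx: "dst x" and c: "0 \<le> c"
    and H: "\<And>i j. i < nn \<Longrightarrow> j < nn \<Longrightarrow> i \<noteq> j \<Longrightarrow>
              x i \<noteq> WT f m x j \<and> av (WT f m x j - \<xi> j) \<le> c * uu x j * av (x i - WT f m x j)"
    and i: "i < nn"
  shows "av (WT f (Suc m) x i - \<xi> i) \<le>
           ((1 + c * Efun av nn p \<xi> x / aa) ^ (nn - 1) - 1) * av (x i - \<xi> i)"
proof -
  define y where "y = WT f m x"
  define S where "S = {..<nn} - {i}"
  define b where "b j = (y j - \<xi> j) / (x i - y j)" for j
  have fS: "finite S" by (simp add: S_def)
  have nz: "x i - y j \<noteq> 0" if "j \<in> S" for j using H[of i j] that i by (auto simp: S_def y_def)
  have Dy: "(\<Prod>j\<in>S. x i - y j) \<noteq> 0" using nz fS by simp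
  have "WT f (Suc m) x i - \<xi> i = (x i - \<xi> i) - poly f (x i) / (lead_coeff f * (\<Prod>j\<in>S. x i - y j))"
    by (simp add: y_def S_def)
  also have "poly f (x i) / (lead_coeff f * (\<Prod>j\<in>S. x i - y j)) =
      (x i - \<xi> i) * ((\<Prod>j\<in>S. x i - \<xi> j) / (\<Prod>j\<in>S. x i - y j))"
  proof -
    have "poly f (x i) = lead_coeff f * ((x i - \<xi> i) * (\<Prod>j\<in>S. x i - \<xi> j))"
      using poly_split[OF i, of "x i"] by (simp add: S_def)
    thus ?thesis using lc Dy by simp
  qed
  also have "(\<Prod>j\<in>S. x i - \<xi> j) / (\<Prod>j\<in>S. x i - y j) = (\<Prod>j\<in>S. 1 + b j)"
  proof -
    have "(\<Prod>j\<in>S. x i - \<xi> j) / (\<Prod>j\<in>S. x i - y j) = (\<Prod>j\<in>S. (x i - \<xi> j) / (x i - y j))"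
      by (rule prod_dividef[symmetric])
    also have "\<dots> = (\<Prod>j\<in>S. 1 + b j)"
      using nz by (intro prod.cong) (auto simp: b_def field_simps)
    finally show ?thesis .
  qed
  finally have eq: "WT f (Suc m) x i - \<xi> i = (x i - \<xi> i) * (1 - (\<Prod>j\<in>S. 1 + b j))"
    by (simp add: algebra_simps)
  have bj: "av (b j) \<le> c * uu x j" if "j \<in> S" for j
  proof -
    have pos: "0 < av (x i - y j)" using nz[OF that] pos by blast
    have "av (y j - \<xi> j) \<le> c * uu x j * av (x i - y j)" using H[of i j] that i by (auto simp: S_def y_def)
    thus ?thesis using pos by (simp add: b_def divide pos_divide_le_eq)
  qed
  have "av (WT f (Suc m) x i - \<xi> i) = av (x i - \<xi> i) * av (1 - (\<Prod>j\<in>S. 1 + b j))"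
    unfolding eq by (rule mult)
  also have "\<dots> \<le> av (x i - \<xi> i) * ((\<Prod>j\<in>S. 1 + av (b j)) - 1)"
    using prod_one_minus[OF fS, of b] by (intro mult_left_mono) auto
  also have "\<dots> \<le> av (x i - \<xi> i) * ((\<Prod>j\<in>S. 1 + c * uu x j) - 1)"
    using bj by (intro mult_left_mono diff_right_mono prod_mono) auto
  also have "\<dots> \<le> av (x i - \<xi> i) * ((1 + c * Efun av nn p \<xi> x / aa) ^ (nn - 1) - 1)"
    using HA[OF p1 nn2 i c, of "uu x"] U0 unfolding S_def Efun_eq aa_def
    by (intro mult_left_mono diff_right_mono) auto
  finally show ?thesis by (simp add: mult.commute)
qed

end

context WS begin

lemma Ebounds: "0 \<le> Efun av nn p \<xi> x"
  unfolding Efun_eq using pnorm_nonneg[OF p1, of nn] nn2 by simp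

lemma LV:
  assumes dx: "dst x" and vt: "valid (Efun av nn p \<xi> x)"
  shows "WD f m x \<and> (\<forall>i<nn. \<forall>j<nn. i \<noteq> j \<longrightarrow> x i \<noteq> WT f m x j \<and>
          av (WT f m x j - \<xi> j) \<le> phiN nn p m (Efun av nn p \<xi> x) * uu x j * av (x i - WT f m x j))"
proof (induction m)
  case 0
  then show ?case using dx U3[OF dx] by (auto simp: dst_def)
next
  case (Suc m)
  define t where "t = Efun av nn p \<xi> x"
  define w where "w = omegaN nn p m t"
  define y where "y = WT f (Suc m) x"
  note R1 = RF1[OF vt[folded t_def], of m]
  have c0: "0 \<le> phiN nn p m t" using R1 by blast
  have w1: "1 \<le> w" and wpos: "0 < 1 - 2 * t * w" using R1 by (auto simp: w_def)
  have t0: "0 \<le> t" using Ebounds by (simp add: t_def)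
  have yb: "av (y j - \<xi> j) \<le> (w - 1) * av (x j - \<xi> j)" if "j < nn" for j
  proof -
    have "av (y j - \<xi> j) \<le> ((1 + phiN nn p m t * t / aa) ^ (nn - 1) - 1) * av (x j - \<xi> j)"
      unfolding y_def t_def by (rule stepA[OF dx c0[unfolded t_def] _ that]) (use Suc in auto)
    also have "(1 + phiN nn p m t * t / aa) ^ (nn - 1) = w"
      unfolding w_def omegaN_eq by (simp add: mult.commute)
    finally show ?thesis .
  qed
  have main: "x i \<noteq> y j \<and> av (y j - \<xi> j) \<le> phiN nn p (Suc m) t * uu x j * av (x i - y j)"
    if ij: "i < nn" "j < nn" "i \<noteq> j" for i j
  proof -
    define D where "D = av (x i - x j)"
    have D0: "0 < D" unfolding D_def using dx ij by (intro pos) (auto simp: dst_def)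
    have e2: "av (x j - \<xi> j) \<le> t * D"
    proof -
      have "av (x j - \<xi> j) \<le> uu x j * D" unfolding D_def by (rule U3[OF dx ij])
      also have "\<dots> \<le> t * D" using U1[OF ij(2)] D0 by (simp add: t_def mult_right_mono)
      finally show ?thesis .
    qed
    have e1: "av (x j - y j) \<le> w * av (x j - \<xi> j)"
    proof -
      have "av (x j - y j) \<le> av (x j - \<xi> j) + av (\<xi> j - y j)" by (rule tri_diff)
      also have "\<dots> \<le> av (x j - \<xi> j) + (w - 1) * av (x j - \<xi> j)"
        using yb[OF ij(2)] commute by simp
      finally show ?thesis by (simp add: algebra_simps)
    qed
    have e3: "D \<le> av (x i - y j) + av (y j - x j)" unfolding D_def by (rule tri_diff)
    have "w * av (x j - \<xi> j) \<le> w * (t * D)" using e2 w1 by (simp add: mult_left_mono)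
    hence "av (y j - x j) \<le> w * t * D" using e1 commute[of "y j" "x j"] by (simp add: mult.assoc)
    moreover have "0 \<le> w * t * D" using w1 t0 D0 by simp
    ultimately have g: "(1 - 2 * t * w) * D \<le> av (x i - y j)" using e3
      by (simp add: algebra_simps)
    have Y0: "0 < av (x i - y j)" using g wpos D0 by (smt (verit) mult_pos_pos)
    hence ne: "x i \<noteq> y j" by auto
    have "av (y j - \<xi> j) \<le> (w - 1) * (uu x j * D)"
      using yb[OF ij(2)] U3[OF dx ij] w1 unfolding D_def
      by (meson diff_ge_0_iff_ge mult_left_mono order_trans)
    also have "\<dots> \<le> (w - 1) * (uu x j * (av (x i - y j) / (1 - 2 * t * w)))"
      using g wpos w1 U0[of x j] by (intro mult_left_mono) (auto simp: pos_le_divide_eq mult.commute)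
    also have "\<dots> = phiN nn p (Suc m) t * uu x j * av (x i - y j)"
      by (simp add: phiSuc w_def)
    finally show ?thesis using ne by simp
  qed
  have "WD f (Suc m) x" using Suc by simp
  thus ?case using main by (simp add: y_def t_def)
qed

lemma OneStep:
  assumes dx: "dst x" and vt: "valid (Efun av nn p \<xi> x)" and N: "1 \<le> N"
  defines "t \<equiv> Efun av nn p \<xi> x"
  shows "WD f N x \<and>
    (\<forall>i<nn. av (WT f N x i - \<xi> i) \<le> (omegaN nn p (N - 1) t - 1) * av (x i - \<xi> i)) \<and>
    dst (WT f N x) \<and>
    (\<forall>i<nn. (1 - 2 * t * omegaN nn p (N - 1) t) * dist_i av nn x i \<le> dist_i av nn (WT f N x) i) \<and>
    Efun av nn p \<xi> (WT f N x) \<le> phiN nn p N t * t"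
proof -
  obtain M where NM: "N = Suc M" using N by (cases N) auto
  define w where "w = omegaN nn p M t"
  define y where "y = WT f N x"
  note R1 = RF1[OF vt[folded t_def], of M]
  have c0: "0 \<le> phiN nn p M t" using R1 by blast
  have w1: "1 \<le> w" and wpos: "0 < 1 - 2 * t * w" using R1 by (auto simp: w_def)
  have t0: "0 \<le> t" using Ebounds by (simp add: t_def)
  note LVM = LV[OF dx vt, of M]
  have yb: "av (y j - \<xi> j) \<le> (w - 1) * av (x j - \<xi> j)" if "j < nn" for j
  proof -
    have "av (y j - \<xi> j) \<le> ((1 + phiN nn p M t * t / aa) ^ (nn - 1) - 1) * av (x j - \<xi> j)"
      unfolding y_def t_def NM by (rule stepA[OF dx c0[unfolded t_def] _ that]) (use LVM in auto)
    also have "(1 + phiN nn p M t * t / aa) ^ (nn - 1) = w"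
      unfolding w_def omegaN_eq by (simp add: mult.commute)
    finally show ?thesis .
  qed
  have WDN: "WD f N x" using LV[OF dx vt, of N] by blast
  have xy: "av (x k - y k) \<le> w * av (x k - \<xi> k)" if "k < nn" for k
  proof -
    have "av (x k - y k) \<le> av (x k - \<xi> k) + av (\<xi> k - y k)" by (rule tri_diff)
    also have "\<dots> \<le> av (x k - \<xi> k) + (w - 1) * av (x k - \<xi> k)"
      using yb[OF that] commute by simp
    finally show ?thesis by (simp add: algebra_simps)
  qed
  have sep: "(1 - 2 * t * w) * av (x i - x j) \<le> av (y i - y j)"
    if ij: "i < nn" "j < nn" "i \<noteq> j" for i j
  proof -
    define D where "D = av (x i - x j)"
    have D0: "0 < D" unfolding D_def using dx ij by (intro pos) (auto simp: dst_def)
    have ui: "av (x i - \<xi> i) \<le> t * D"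
    proof -
      have "av (x i - \<xi> i) \<le> uu x i * av (x j - x i)" using U3[OF dx ij(2,1)] ij by auto
      also have "\<dots> \<le> t * D" using U1[OF ij(1)] D0 commute by (simp add: t_def mult_right_mono D_def)
      finally show ?thesis .
    qed
    have uj: "av (x j - \<xi> j) \<le> t * D"
    proof -
      have "av (x j - \<xi> j) \<le> uu x j * D" unfolding D_def by (rule U3[OF dx ij])
      also have "\<dots> \<le> t * D" using U1[OF ij(2)] D0 by (simp add: t_def mult_right_mono)
      finally show ?thesis .
    qed
    have a1: "av (x i - y i) \<le> w * (t * D)"
      using xy[OF ij(1)] ui w1 by (meson mult_left_mono order_trans less_le_trans zero_less_one less_imp_le)
    have a2: "av (y j - x j) \<le> w * (t * D)"
      using xy[OF ij(2)] uj w1 commute[of "y j" "x j"]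
      by (metis mult_left_mono order_trans le_numeral_extra(1) dual_order.trans)
    have "D \<le> av (x i - y i) + av (y i - x j)" unfolding D_def by (rule tri_diff)
    also have "av (y i - x j) \<le> av (y i - y j) + av (y j - x j)" by (rule tri_diff)
    finally have "D \<le> av (x i - y i) + av (y i - y j) + av (y j - x j)" by simp
    thus ?thesis using a1 a2 unfolding D_def[symmetric] by (simp add: algebra_simps)
  qed
  have dy: "dst y"
    unfolding dst_def
  proof (intro allI impI)
    fix i j assume "i < nn" "j < nn" "i \<noteq> j"
    moreover have "0 < av (x i - x j)" using dx calculation by (intro pos) (auto simp: dst_def)
    ultimately have "0 < av (y i - y j)" using sep wpos by (smt (verit) mult_pos_pos)
    thus "y i \<noteq> y j" by auto
  qed
  have dd: "(1 - 2 * t * w) * dist_i av nn x i \<le> dist_i av nn y i" if i: "i < nn" for i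
  proof -
    have "(i = 0 \<longrightarrow> 1 \<in> {..<nn} - {i}) \<and> (i \<noteq> 0 \<longrightarrow> 0 \<in> {..<nn} - {i})" using nn2 i by auto
    hence ne: "{..<nn} - {i} \<noteq> {}" by blast
    have "(1 - 2 * t * w) * dist_i av nn x i \<le> av (y i - y j)" if "j \<in> {..<nn} - {i}" for j
    proof -
      have "(1 - 2 * t * w) * dist_i av nn x i \<le> (1 - 2 * t * w) * av (x i - x j)"
        using D2[OF i, of j x] that wpos by (intro mult_left_mono) auto
      also have "\<dots> \<le> av (y i - y j)" using sep[OF i, of j] that by auto
      finally show ?thesis .
    qed
    thus ?thesis unfolding dist_i_def[of av nn y] using ne by (intro Min.boundedI) auto
  qed
  have Ey: "Efun av nn p \<xi> y \<le> phiN nn p N t * t"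
  proof -
    have "\<bar>uu y i\<bar> \<le> phiN nn p N t * \<bar>uu x i\<bar>" if i: "i < nn" for i
    proof -
      have dxp: "0 < dist_i av nn x i" by (rule D1[OF dx i])
      have dyp: "0 < dist_i av nn y i" by (rule D1[OF dy i])
      have "\<bar>uu y i\<bar> = av (y i - \<xi> i) / dist_i av nn y i" using dyp by (simp add: uu_def)
      also have "\<dots> \<le> ((w - 1) * av (x i - \<xi> i)) / ((1 - 2 * t * w) * dist_i av nn x i)"
        using yb[OF i] dd[OF i] dxp wpos w1 by (intro frac_le) auto
      also have "\<dots> = ((w - 1) / (1 - 2 * t * w)) * (av (x i - \<xi> i) / dist_i av nn x i)" by simp
      also have "\<dots> = phiN nn p N t * \<bar>uu x i\<bar>" using dxp by (simp add: uu_def NM phiSuc w_def)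
      finally show ?thesis .
    qed
    hence "pnorm nn p (uu y) \<le> phiN nn p N t * pnorm nn p (uu x)"
      using nn2 c0 RF1[OF vt[folded t_def], of N] by (intro pnorm_le_scaled[OF p1]) auto
    thus ?thesis by (simp add: Efun_eq t_def)
  qed
  show ?thesis using WDN yb dy dd Ey by (simp add: y_def w_def NM)
qed

end

lemma bern_strict:
  fixes h :: real
  assumes "-1 < h" "h \<noteq> 0" "2 \<le> m"
  shows "1 + real m * h < (1 + h) ^ m"
  using assms(3)
proof (induction m rule: dec_induct)
  case base
  have "0 < h * h" using assms(2) by (cases "0 < h") (auto intro: mult_neg_neg)
  then show ?case by (simp add: power2_eq_square algebra_simps)
next
  case (step m)
  have "0 \<le> real m * (h * h)" by simp
  hence "1 + real (Suc m) * h \<le> (1 + h) * (1 + real m * h)"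
    by (simp add: algebra_simps)
  also have "\<dots> < (1 + h) * (1 + h) ^ m" using step assms by (intro mult_strict_left_mono) auto
  finally show ?case by simp
qed

lemma amgm_strict:
  fixes x y :: real
  assumes x: "0 < x" and y: "0 < y" and K: "1 \<le> K" and xy: "x \<noteq> y"
  shows "x * y ^ K < ((x + real K * y) / (real K + 1)) ^ (K + 1)"
proof -
  define h where "h = (x - y) / ((real K + 1) * y)"
  have den: "0 < (real K + 1) * y" using y by simp
  have "0 \<le> y * real K" using y by simp
  hence "-1 * ((real K + 1) * y) < x - y" using x y by (simp add: algebra_simps, linarith)
  hence h1: "-1 < h" unfolding h_def using den by (simp add: less_divide_eq)
  have h0: "h \<noteq> 0" using xy y unfolding h_def by simp
  have hy: "(real K + 1) * h * y = x - y" unfolding h_def using den y by simp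
  have "(real K + 1) * (y * (1 + h)) = x + real K * y" using hy by (simp add: algebra_simps)
  hence M: "(x + real K * y) / (real K + 1) = y * (1 + h)"
    by (metis add_nonneg_pos divide_eq_eq less_irrefl of_nat_0_le_iff zero_less_one mult.commute)
  have "x * y ^ K = y ^ K * (y + (real K + 1) * h * y)" unfolding hy by simp
  also have "\<dots> = y ^ (K + 1) * (1 + real (K + 1) * h)" by (simp add: algebra_simps)
  finally have "x * y ^ K = y ^ (K + 1) * (1 + real (K + 1) * h)" .
  also have "\<dots> < y ^ (K + 1) * (1 + h) ^ (K + 1)"
    using bern_strict[OF h1 h0, of "K + 1"] K y by (intro mult_strict_left_mono) auto
  also have "\<dots> = ((x + real K * y) / (real K + 1)) ^ (K + 1)" unfolding M by (simp add: power_mult_distrib)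
  finally show ?thesis .
qed

lemma exp_lower:
  fixes z c :: real
  assumes "0 \<le> z" "z \<le> c" "c < 1"
  shows "exp (- z / (1 - c)) \<le> 1 - z"
proof -
  have z1: "z < 1" using assms by simp
  have "1 + z / (1 - z) \<le> exp (z / (1 - z))" by (rule exp_ge_add_one_self)
  hence "1 / (1 - z) \<le> exp (z / (1 - z))" using z1 by (simp add: field_simps)
  hence a: "exp (- (z / (1 - z))) \<le> 1 - z" using z1
    by (simp add: exp_minus field_simps)
  have "z / (1 - z) \<le> z / (1 - c)" using assms z1 by (intro divide_left_mono) auto
  hence "exp (- z / (1 - c)) \<le> exp (- (z / (1 - z)))" by simp
  thus ?thesis using a by linarith
qed

lemma geo_ident:
  fixes N :: nat assumes N: "1 \<le> N"
  shows "N * (((N+1)^k - 1) div N) = (N+1)^k - 1"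
    "((N+1)^(Suc k) - 1) div N = ((N+1)^k - 1) div N + (N+1)^k"
    "k \<le> ((N+1)^k - 1) div N"
proof -
  define g where "g k = (\<Sum>l<k. (N+1)^l)" for k
  have G: "N * g k + 1 = (N+1)^k" for k
    by (induction k) (auto simp: g_def algebra_simps)
  have D: "((N+1)^k - 1) div N = g k" for k
  proof -
    have "(N+1)^k - 1 = N * g k" using G[of k] by linarith
    thus ?thesis using N by simp
  qed
  show "N * (((N+1)^k - 1) div N) = (N+1)^k - 1" unfolding D using G[of k] by (metis add_diff_cancel_right')
  show "((N+1)^(Suc k) - 1) div N = ((N+1)^k - 1) div N + (N+1)^k" by (simp only: D) (simp add: g_def)
  have "k \<le> g k" unfolding g_def
  proof (induction k)
    case (Suc k)
    have "0 < (N+1) ^ k" by simp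
    thus ?case using Suc by (simp only: sum.lessThan_Suc)
  qed simp
  thus "k \<le> ((N+1)^k - 1) div N" by (simp only: D)
qed

context RF begin

lemma init_valid:
  assumes E0: "0 \<le> E"
    and init: "E \<le> real n * (2 powr (1 / real n) - 1) / ((real n - 1) powr (1 - invp p) + 2)"
  shows "valid E"
proof (cases "E = 0")
  case True
  thus ?thesis by (simp add: valid_def omega_eq)
next
  case False
  hence Ep: "0 < E" using E0 by simp
  define K where "K = n - 1"
  have K1: "1 \<le> K" and rK: "real K = real n - 1" and nK: "K + 1 = n" using n2 by (auto simp: K_def)
  have a1: "1 \<le> aa" by (rule aa_ge1)
  have r1: "(real n - 1) powr (1 - invp p) = real K / aa"
    unfolding aa_def powr_diff using rK K1 by simp
  define B where "B = real K / aa + 2"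
  have "0 \<le> real K / aa" using a1 by simp
  hence B0: "0 < B" by (simp add: B_def)
  have "E * B \<le> real n * (2 powr (1 / real n) - 1)"
    using init B0 unfolding r1 B_def[symmetric] by (simp add: pos_le_divide_eq add.commute)
  hence EB: "E * B / real n \<le> 2 powr (1 / real n) - 1" using n2 by (simp add: divide_le_eq mult.commute)
  define x where "x = 1 + 2 * E"
  define y where "y = 1 + E / aa"
  have xy: "x \<noteq> y"
  proof
    assume "x = y"
    hence "2 * E = E / aa" by (simp add: x_def y_def)
    moreover have "E / aa \<le> E" using a1 E0 by (simp add: divide_le_eq mult_le_cancel_left1 mult.commute)
    ultimately show False using Ep by simp
  qed
  have "x * y ^ K < ((x + real K * y) / (real K + 1)) ^ (K + 1)"
  proof (rule amgm_strict)
    have "0 \<le> E / aa" using E0 a1 by simp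
    thus "0 < y" by (simp add: y_def)
  qed (use xy K1 E0 a1 in \<open>auto simp: x_def\<close>)
  also have "(x + real K * y) / (real K + 1) = 1 + E * B / real n"
  proof -
    have rn: "real n = real K + 1" using rK by simp
    have aa0: "aa \<noteq> 0" using a1 by simp
    have k0: "real K + 1 \<noteq> 0" by simp
    have d0: "aa + real K * aa \<noteq> 0" using a1 by (smt (verit) of_nat_0_le_iff mult_nonneg_nonneg)
    show ?thesis using aa0 k0 d0 unfolding rn by (simp add: x_def y_def B_def field_simps)
  qed
  also have "(1 + E * B / real n) ^ (K + 1) \<le> (2 powr (1 / real n)) ^ (K + 1)"
    using EB Ep B0 n2 by (intro power_mono) auto
  also have "(2 powr (1 / real n)) ^ (K + 1) = 2"
  proof -
    have "(2 powr (1 / real n)) ^ (K + 1) = (2 powr (1 / real n)) powr (real n)"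
      using nK by (simp add: powr_realpow)
    also have "\<dots> = 2" using n2 by (simp add: powr_powr)
    finally show ?thesis .
  qed
  finally show ?thesis unfolding valid_def using E0 by (simp add: omega_eq x_def y_def K_def)
qed

end

theorem corollary2p13:
  fixes av :: "'a::field \<Rightarrow> real" and f :: "'a poly" and \<xi> x0 :: "nat \<Rightarrow> 'a"
    and N :: nat and p :: ereal
  assumes absval: "is_absval av"
    and closed: "alg_closed_field TYPE('a)"
    and deg: "degree f \<ge> 2"
    and root: "is_root_vector f \<xi>"
    and N: "N \<ge> 1"
    and p: "1 \<le> p"
    and distinct: "\<forall>i<degree f. \<forall>j<degree f. i \<noteq> j \<longrightarrow> x0 i \<noteq> x0 j"
    and init: "Efun av (degree f) p \<xi> x0 \<le>
       real (degree f) * (2 powr (1 / real (degree f)) - 1) /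
         ((real (degree f) - 1) powr (1 - invp p) + 2)"
  shows "let n = degree f; x = (\<lambda>k. (WT f N ^^ k) x0); E = Efun av n p \<xi> x0;
             lam = phiN n p N E; \<theta> = psiN n p N E; \<mu> = phi n p E;
             err = (\<lambda>k. pnorm n p (\<lambda>i. av (x k i - \<xi> i))) in
     (\<forall>k. WD f N (x k))
   \<and> (\<forall>i<n. ((\<lambda>k. av (x k i - \<xi> i)) \<longlonglongrightarrow> 0))
   \<and> (\<exists>C. \<forall>k. err (Suc k) \<le> C * err k ^ (N + 1))
   \<and> (\<forall>k. \<forall>i<n. av (x (Suc k) i - \<xi> i) \<le> \<theta> * lam ^ ((N + 1) ^ k) * av (x k i - \<xi> i))
   \<and> (\<forall>k. \<forall>i<n. av (x k i - \<xi> i) \<le> \<theta> ^ k * lam ^ (((N + 1) ^ k - 1) div N) * av (x0 i - \<xi> i))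
   \<and> (\<forall>k. \<forall>i<n. av (x (Suc k) i - \<xi> i) \<le> \<mu> ^ (N * (N + 1) ^ k) * av (x k i - \<xi> i))
   \<and> (\<forall>k. \<forall>i<n. av (x k i - \<xi> i) \<le> \<mu> ^ ((N + 1) ^ k - 1) * av (x0 i - \<xi> i))"
proof -
  interpret W: WS av f p \<xi>
    by unfold_locales (use absval deg p root in auto)
  define n where "n = degree f"
  define x where "x = (\<lambda>k. (WT f N ^^ k) x0)"
  define E where "E = Efun av n p \<xi> x0"
  define lam where "lam = phiN n p N E"
  define th where "th = psiN n p N E"
  define mu where "mu = phi n p E"
  define err where "err = (\<lambda>k. pnorm n p (\<lambda>i. av (x k i - \<xi> i)))"
  define e where "e k = ((N + 1) ^ k - 1) div N" for k
  define M where "M = N - 1"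
  have NM: "N = Suc M" using N by (simp add: M_def)
  define wE where "wE = omegaN n p M E"
  have n2: "2 \<le> n" using deg by (simp add: n_def)
  have E0: "0 \<le> E" unfolding E_def n_def by (rule W.Ebounds)
  have vE: "W.valid E" unfolding E_def n_def
    by (rule W.init_valid) (use W.Ebounds init in auto)
  note vb = W.valid_basic[OF vE[unfolded n_def]]
  have mu0: "0 \<le> mu" and mu1: "mu < 1" using vb by (auto simp: mu_def n_def)
  note R1N = W.RF1[OF vE[unfolded n_def], of N]
  note R1M = W.RF1[OF vE[unfolded n_def], of M]
  have lam0: "0 \<le> lam" and lammu: "lam \<le> mu ^ N" using R1N by (auto simp: lam_def mu_def n_def)
  have lam1: "lam \<le> 1"
    using lammu mu0 mu1 by (meson less_imp_le order_trans power_le_one)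
  have lamlt: "lam < 1"
  proof -
    have "mu ^ N < 1" using mu0 mu1 N by (simp add: power_less_one_iff)
    thus ?thesis using lammu by simp
  qed
  have wE1: "1 \<le> wE" and wEpos: "0 < 1 - 2 * E * wE" using R1M by (auto simp: wE_def n_def)
  have th_eq: "th = 1 - 2 * E * wE" by (simp add: th_def psiN_def wE_def M_def)
  have th0: "0 < th" and th1: "th \<le> 1" using th_eq wEpos wE1 E0 by auto
  have thlam: "th * lam = wE - 1"
    using wEpos by (simp add: th_eq lam_def NM W.phiSuc wE_def n_def)
  have xS: "x (Suc k) = WT f N (x k)" for k by (simp add: x_def)
  have GI: "N * e k = (N + 1) ^ k - 1" "e (Suc k) = e k + (N + 1) ^ k" "k \<le> e k" for k
    using geo_ident[OF N, of k] by (auto simp: e_def)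
  have GI2: "(N + 1) ^ k = N * e k + 1" for k
  proof -
    have "0 < (N + 1) ^ k" by simp
    thus ?thesis using GI(1)[of k] by linarith
  qed
  have Inv: "W.dst (x k) \<and> Efun av n p \<xi> (x k) \<le> lam ^ (e k) * E" for k
  proof (induction k)
    case 0
    show ?case using distinct by (simp add: x_def W.dst_def e_def E_def n_def)
  next
    case (Suc k)
    define t where "t = Efun av n p \<xi> (x k)"
    define s where "s = lam ^ (e k)"
    have s0: "0 \<le> s" and s1: "s \<le> 1" using lam0 lam1 by (auto simp: s_def power_le_one)
    have t0: "0 \<le> t" unfolding t_def n_def by (rule W.Ebounds)
    have ts: "t \<le> s * E" using Suc by (simp add: t_def s_def)
    have tE: "t \<le> E" using ts s1 E0 by (meson mult_left_le_one_le order_trans s0)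
    have vt: "W.valid t" using W.valid_mono[OF vE[unfolded n_def] t0 tE] by (simp add: n_def)
    have dk: "W.dst (x k)" using Suc by simp
    note OS = W.OneStep[OF dk vt[unfolded t_def n_def] N]
    have E1: "Efun av n p \<xi> (x (Suc k)) \<le> phiN n p N t * t"
      using OS dk by (simp add: xS t_def n_def)
    have f1: "phiN n p N t \<le> s ^ N * lam"
      using W.RF2[OF vE[unfolded n_def] s0 s1 t0 ts, of N] by (simp add: lam_def n_def)
    have "phiN n p N t * t \<le> (s ^ N * lam) * (s * E)"
      using f1 ts t0 W.RF1[OF vt[unfolded n_def], of N] by (intro mult_mono) (auto simp: n_def)
    also have "\<dots> = lam ^ (e (Suc k)) * E"
    proof -
      have "(s ^ N * lam) * (s * E) = lam ^ (e k * N + 1 + e k) * E"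
        by (simp add: s_def power_add power_mult[symmetric] mult.commute mult.left_commute)
      also have "e k * N + 1 + e k = e (Suc k)" using GI(2)[of k] GI2[of k] by (simp add: mult.commute)
      finally show ?thesis .
    qed
    finally have "Efun av n p \<xi> (x (Suc k)) \<le> lam ^ (e (Suc k)) * E" using E1 by linarith
    moreover have "W.dst (x (Suc k))" using OS dk by (simp add: xS n_def)
    ultimately show ?case by simp
  qed
  have per: "WD f N (x k) \<and> W.valid (Efun av n p \<xi> (x k)) \<and>
     Efun av n p \<xi> (x k) \<le> lam ^ k * E \<and>
     (\<forall>i<n. av (x (Suc k) i - \<xi> i) \<le> (omegaN n p M (Efun av n p \<xi> (x k)) - 1) * av (x k i - \<xi> i)) \<and>
     (\<forall>i<n. (1 - 2 * Efun av n p \<xi> (x k) * omegaN n p M (Efun av n p \<xi> (x k))) * dist_i av n (x k) i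
        \<le> dist_i av n (x (Suc k)) i) \<and>
     omegaN n p M (Efun av n p \<xi> (x k)) - 1 \<le> th * lam ^ ((N + 1) ^ k)" for k
  proof -
    define t where "t = Efun av n p \<xi> (x k)"
    define s where "s = lam ^ (e k)"
    have s0: "0 \<le> s" and s1: "s \<le> 1" using lam0 lam1 by (auto simp: s_def power_le_one)
    have t0: "0 \<le> t" unfolding t_def n_def by (rule W.Ebounds)
    have ts: "t \<le> s * E" using Inv[of k] by (simp add: t_def s_def)
    have tE: "t \<le> E" using ts s1 E0 by (meson mult_left_le_one_le order_trans s0)
    have slk: "s \<le> lam ^ k" unfolding s_def using GI(3)[of k] lam0 lam1 by (rule power_decreasing)
    have tk: "t \<le> lam ^ k * E" using ts slk E0 by (meson mult_right_mono order_trans)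
    have vt: "W.valid t" using W.valid_mono[OF vE[unfolded n_def] t0 tE] by (simp add: n_def)
    have dk: "W.dst (x k)" using Inv[of k] by simp
    note OS = W.OneStep[OF dk vt[unfolded t_def n_def] N]
    have w: "omegaN n p M t - 1 \<le> s ^ N * (wE - 1)"
      using W.RF2[OF vE[unfolded n_def] s0 s1 t0 ts, of M] by (simp add: wE_def n_def NM)
    also have "\<dots> = th * (s ^ N * lam)" unfolding thlam[symmetric] by (simp add: algebra_simps)
    also have "s ^ N * lam = lam ^ ((N + 1) ^ k)"
      unfolding s_def GI2[of k] by (simp add: power_mult[symmetric] mult.commute)
    finally have w2: "omegaN n p M t - 1 \<le> th * lam ^ ((N + 1) ^ k)" .
    show ?thesis using OS vt tk w2 by (simp add: t_def n_def xS M_def)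
  qed
  have C4: "av (x (Suc k) i - \<xi> i) \<le> th * lam ^ ((N + 1) ^ k) * av (x k i - \<xi> i)"
    if "i < n" for k i
  proof -
    have "av (x (Suc k) i - \<xi> i) \<le> (omegaN n p M (Efun av n p \<xi> (x k)) - 1) * av (x k i - \<xi> i)"
      using per[of k] that by blast
    also have "\<dots> \<le> th * lam ^ ((N + 1) ^ k) * av (x k i - \<xi> i)"
      using per[of k] by (intro mult_right_mono) auto
    finally show ?thesis .
  qed
  have C5: "av (x k i - \<xi> i) \<le> th ^ k * lam ^ (e k) * av (x0 i - \<xi> i)" if i: "i < n" for k i
  proof (induction k)
    case 0
    show ?case by (simp add: x_def e_def)
  next
    case (Suc k)
    have "av (x (Suc k) i - \<xi> i) \<le> th * lam ^ ((N + 1) ^ k) * av (x k i - \<xi> i)" by (rule C4[OF i])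
    also have "\<dots> \<le> th * lam ^ ((N + 1) ^ k) * (th ^ k * lam ^ (e k) * av (x0 i - \<xi> i))"
      using Suc th0 lam0 by (intro mult_left_mono) auto
    also have "\<dots> = th ^ Suc k * lam ^ (e (Suc k)) * av (x0 i - \<xi> i)"
      by (simp add: GI(2) power_add algebra_simps)
    finally show ?case .
  qed
  have C6: "av (x (Suc k) i - \<xi> i) \<le> mu ^ (N * (N + 1) ^ k) * av (x k i - \<xi> i)" if i: "i < n" for k i
  proof -
    have "th * lam ^ ((N + 1) ^ k) \<le> 1 * (mu ^ N) ^ ((N + 1) ^ k)"
      using th0 th1 lam0 lammu by (intro mult_mono power_mono) auto
    hence "th * lam ^ ((N + 1) ^ k) \<le> mu ^ (N * (N + 1) ^ k)" by (simp add: power_mult)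
    hence "th * lam ^ ((N + 1) ^ k) * av (x k i - \<xi> i) \<le> mu ^ (N * (N + 1) ^ k) * av (x k i - \<xi> i)"
      by (intro mult_right_mono) auto
    with C4[OF i, of k] show ?thesis by linarith
  qed
  have C7: "av (x k i - \<xi> i) \<le> mu ^ ((N + 1) ^ k - 1) * av (x0 i - \<xi> i)" if i: "i < n" for k i
  proof -
    have "th ^ k * lam ^ (e k) \<le> 1 * (mu ^ N) ^ (e k)"
      using th0 th1 lam0 lammu by (intro mult_mono power_mono power_le_one) auto
    hence "th ^ k * lam ^ (e k) \<le> mu ^ ((N + 1) ^ k - 1)" by (simp add: power_mult[symmetric] GI(1))
    hence "th ^ k * lam ^ (e k) * av (x0 i - \<xi> i) \<le> mu ^ ((N + 1) ^ k - 1) * av (x0 i - \<xi> i)"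
      by (intro mult_right_mono) auto
    with C5[OF i, of k] show ?thesis by linarith
  qed
  have Conv: "(\<lambda>k. av (x k i - \<xi> i)) \<longlonglongrightarrow> 0" if i: "i < n" for i
  proof (rule Lim_null_comparison)
    have "norm (av (x k i - \<xi> i)) \<le> mu ^ k * av (x0 i - \<xi> i)" for k
    proof -
      have "e k \<le> N * e k" using N by simp
      hence "k \<le> (N + 1) ^ k - 1" using GI(1)[of k] GI(3)[of k] by linarith
      hence "mu ^ ((N + 1) ^ k - 1) \<le> mu ^ k" using mu0 mu1 by (intro power_decreasing) auto
      hence "mu ^ ((N + 1) ^ k - 1) * av (x0 i - \<xi> i) \<le> mu ^ k * av (x0 i - \<xi> i)"
        by (intro mult_right_mono) auto
      thus ?thesis using C7[OF i, of k] by simp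
    qed
    thus "\<forall>\<^sub>F k in sequentially. norm (av (x k i - \<xi> i)) \<le> mu ^ k * av (x0 i - \<xi> i)" by simp
    show "(\<lambda>k. mu ^ k * av (x0 i - \<xi> i)) \<longlonglongrightarrow> 0"
      using mu0 mu1 by (intro tendsto_mult_left_zero LIMSEQ_power_zero) auto
  qed
  have err0: "0 \<le> err k" for k unfolding err_def using pnorm_nonneg[OF p] n2 by simp
  have errstep: "err (Suc k) \<le> (omegaN n p M (Efun av n p \<xi> (x k)) - 1) * err k" for k
  proof -
    have v: "W.valid (Efun av n p \<xi> (x k))" using per[of k] by blast
    have "1 \<le> omegaN n p M (Efun av n p \<xi> (x k))" using W.RF1[OF v[unfolded n_def], of M] by (simp add: n_def)
    thus ?thesis unfolding err_def using per[of k] n2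
      by (intro pnorm_le_scaled[OF p]) auto
  qed
  define c where "c = 1 - th"
  have c0: "0 \<le> c" and c1: "c < 1" using th0 th1 by (auto simp: c_def)
  have c_eq: "c = 2 * E * wE" by (simp add: c_def th_eq)
  have dpos: "0 < dist_i av n (x k) i" if "i < n" for k i
    using W.D1[of "x k" i] Inv[of k] that by (simp add: n_def)
  have dstep: "(1 - c * lam ^ k) * dist_i av n (x k) i \<le> dist_i av n (x (Suc k)) i" if i: "i < n" for k i
  proof -
    define t where "t = Efun av n p \<xi> (x k)"
    have t0: "0 \<le> t" unfolding t_def n_def by (rule W.Ebounds)
    have tk: "t \<le> lam ^ k * E" using per[of k] by (simp add: t_def)
    have tE: "t \<le> E" using tk lam0 lam1 E0 by (meson mult_left_le_one_le order_trans power_le_one zero_le_power)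
    have wt: "omegaN n p M t \<le> wE" using W.RF2w[OF vE[unfolded n_def] t0 tE, of M] by (simp add: wE_def n_def)
    have wt0: "0 \<le> omegaN n p M t"
      using W.RF1[OF W.valid_mono[OF vE[unfolded n_def] t0 tE], of M] by (simp add: n_def)
    have "2 * t * omegaN n p M t \<le> 2 * (lam ^ k * E) * wE"
      using tk wt t0 wt0 by (intro mult_mono) auto
    hence "1 - c * lam ^ k \<le> 1 - 2 * t * omegaN n p M t" by (simp add: c_eq algebra_simps)
    hence "(1 - c * lam ^ k) * dist_i av n (x k) i \<le> (1 - 2 * t * omegaN n p M t) * dist_i av n (x k) i"
      using dpos[OF i, of k] by (intro mult_right_mono) auto
    also have "\<dots> \<le> dist_i av n (x (Suc k)) i" using per[of k] i by (simp add: t_def)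
    finally show ?thesis .
  qed
  have pb: "(\<Prod>l<k. 1 - c * lam ^ l) * dist_i av n x0 i \<le> dist_i av n (x k) i" if i: "i < n" for k i
  proof (induction k)
    case 0 thus ?case by (simp add: x_def)
  next
    case (Suc k)
    have f0: "0 \<le> 1 - c * lam ^ k"
    proof -
      have "c * lam ^ k \<le> c * 1" using c0 lam0 lam1 by (intro mult_left_mono power_le_one) auto
      thus ?thesis using c1 by simp
    qed
    have "(\<Prod>l<Suc k. 1 - c * lam ^ l) * dist_i av n x0 i = (1 - c * lam ^ k) * ((\<Prod>l<k. 1 - c * lam ^ l) * dist_i av n x0 i)"
      by (simp add: algebra_simps)
    also have "\<dots> \<le> (1 - c * lam ^ k) * dist_i av n (x k) i" using Suc f0 by (intro mult_left_mono)
    also have "\<dots> \<le> dist_i av n (x (Suc k)) i" by (rule dstep[OF i])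
    finally show ?case .
  qed
  define rho where "rho = exp (- (c / (1 - c)) / (1 - lam))"
  have rho0: "0 < rho" by (simp add: rho_def)
  have pr: "rho \<le> (\<Prod>l<k. 1 - c * lam ^ l)" for k
  proof -
    have sg: "(\<Sum>l<k. lam ^ l) \<le> 1 / (1 - lam)"
    proof -
      have "(\<Sum>l<k. lam ^ l) = (1 - lam ^ k) / (1 - lam)" using lamlt by (simp add: sum_gp_strict)
      also have "\<dots> \<le> 1 / (1 - lam)" using lamlt lam0 by (intro divide_right_mono) auto
      finally show ?thesis .
    qed
    have cc: "0 \<le> c / (1 - c)" using c0 c1 by simp
    have m: "(c / (1 - c)) * (\<Sum>l<k. lam ^ l) \<le> (c / (1 - c)) * (1 / (1 - lam))"
      using sg cc by (rule mult_left_mono)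
    have "- (c / (1 - c)) / (1 - lam) \<le> - (c / (1 - c)) * (\<Sum>l<k. lam ^ l)" using m by simp
    hence "rho \<le> exp (- (c / (1 - c)) * (\<Sum>l<k. lam ^ l))"
      unfolding rho_def by (simp only: exp_le_cancel_iff)
    also have "\<dots> = exp (\<Sum>l<k. - (c * lam ^ l) / (1 - c))"
      by (simp add: sum_distrib_left sum_negf)
    also have "\<dots> = (\<Prod>l<k. exp (- (c * lam ^ l) / (1 - c)))" by (simp add: exp_sum)
    also have "\<dots> \<le> (\<Prod>l<k. 1 - c * lam ^ l)"
    proof (rule prod_mono)
      fix l assume "l \<in> {..<k}"
      have "c * lam ^ l \<le> c * 1" using c0 lam0 lam1 by (intro mult_left_mono power_le_one) auto
      hence "exp (- (c * lam ^ l) / (1 - c)) \<le> 1 - c * lam ^ l"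
        using c0 c1 lam0 by (intro exp_lower) auto
      thus "0 \<le> exp (- (c * lam ^ l) / (1 - c)) \<and> exp (- (c * lam ^ l) / (1 - c)) \<le> 1 - c * lam ^ l"
        by simp
    qed
    finally show ?thesis .
  qed
  define d0 where "d0 = Min ((\<lambda>i. dist_i av n x0 i) ` {..<n})"
  have d0pos: "0 < d0"
  proof -
    have ne: "(\<lambda>i. dist_i av n x0 i) ` {..<n} \<noteq> {}" using n2 by (auto simp: lessThan_empty_iff)
    have "\<forall>a\<in>(\<lambda>i. dist_i av n x0 i) ` {..<n}. 0 < a" using dpos[of _ 0] by (auto simp: x_def)
    thus ?thesis unfolding d0_def using ne by (simp add: Min_gr_iff)
  qed
  define del where "del = rho * d0"
  have del0: "0 < del" using rho0 d0pos by (simp add: del_def)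
  have delle: "del \<le> dist_i av n (x k) i" if i: "i < n" for k i
  proof -
    have "d0 \<le> dist_i av n x0 i" unfolding d0_def using i by (intro Min_le) auto
    hence "rho * d0 \<le> (\<Prod>l<k. 1 - c * lam ^ l) * dist_i av n x0 i"
      using pr[of k] rho0 d0pos by (intro mult_mono) auto
    thus ?thesis using pb[OF i, of k] by (simp add: del_def)
  qed
  have Eerr: "Efun av n p \<xi> (x k) \<le> (1 / del) * err k" for k
  proof -
    have "\<bar>W.uu (x k) i\<bar> \<le> (1 / del) * \<bar>av (x k i - \<xi> i)\<bar>" if i: "i < n" for i
    proof -
      have "\<bar>W.uu (x k) i\<bar> = av (x k i - \<xi> i) / dist_i av n (x k) i"
        using dpos[OF i, of k] by (simp add: W.uu_def n_def)
      also have "\<dots> \<le> av (x k i - \<xi> i) / del"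
        using delle[OF i, of k] del0 by (intro divide_left_mono) auto
      finally show ?thesis by simp
    qed
    hence "pnorm n p (W.uu (x k)) \<le> (1 / del) * pnorm n p (\<lambda>i. av (x k i - \<xi> i))"
      using n2 del0 by (intro pnorm_le_scaled[OF p]) auto
    thus ?thesis by (simp add: W.Efun_eq n_def err_def)
  qed
  have C3: "\<exists>C. \<forall>k. err (Suc k) \<le> C * err k ^ (N + 1)"
  proof (cases "E = 0")
    case True
    show ?thesis
    proof (intro exI allI)
      fix k
      define t where "t = Efun av n p \<xi> (x k)"
      have t0: "0 \<le> t" unfolding t_def n_def by (rule W.Ebounds)
      have "t \<le> lam ^ k * E" using per[of k] by (simp add: t_def)
      hence tz: "t \<le> 0 * E" using True by simp
      have "omegaN n p M t - 1 \<le> 0 ^ Suc M * (omegaN n p M E - 1)"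
        using W.RF2[OF vE[unfolded n_def] _ _ t0 tz, of M] by (simp add: n_def)
      hence "omegaN n p M t - 1 \<le> 0" by simp
      hence "err (Suc k) \<le> 0" using errstep[of k] err0[of k] t_def
        by (smt (verit) mult_nonpos_nonneg)
      thus "err (Suc k) \<le> 0 * err k ^ (N + 1)" by simp
    qed
  next
    case False
    hence Ep: "0 < E" using E0 by simp
    show ?thesis
    proof (intro exI allI)
      fix k
      define t where "t = Efun av n p \<xi> (x k)"
      have t0: "0 \<le> t" unfolding t_def n_def by (rule W.Ebounds)
      have tE: "t \<le> E" using per[of k] lam0 lam1 E0 t_def
        by (meson mult_left_le_one_le order_trans power_le_one zero_le_power)
      define s where "s = t / E"
      have s0: "0 \<le> s" and s1: "s \<le> 1" using t0 tE Ep by (auto simp: s_def)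
      have ts: "t \<le> s * E" using Ep by (simp add: s_def)
      have w: "omegaN n p M t - 1 \<le> s ^ N * (wE - 1)"
        using W.RF2[OF vE[unfolded n_def] s0 s1 t0 ts, of M] by (simp add: n_def wE_def NM)
      have "s \<le> err k / (del * E)"
        using Eerr[of k] Ep del0 by (simp add: s_def t_def field_simps)
      hence sN: "s ^ N \<le> (err k / (del * E)) ^ N" using s0 by (intro power_mono)
      have "err (Suc k) \<le> (omegaN n p M t - 1) * err k" using errstep[of k] by (simp add: t_def)
      also have "\<dots> \<le> (s ^ N * (wE - 1)) * err k" using w err0 by (intro mult_right_mono)
      also have "\<dots> \<le> ((err k / (del * E)) ^ N * (wE - 1)) * err k"
        using sN wE1 err0 by (intro mult_right_mono) auto
      also have "\<dots> = ((wE - 1) / (del * E) ^ N) * err k ^ (N + 1)"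
        by (simp add: power_divide field_simps)
      finally show "err (Suc k) \<le> ((wE - 1) / (del * E) ^ N) * err k ^ (N + 1)" .
    qed
  qed
  have WDall: "\<forall>k. WD f N (x k)" using per by blast
  have all: "(\<forall>k. WD f N (x k))
   \<and> (\<forall>i<n. ((\<lambda>k. av (x k i - \<xi> i)) \<longlonglongrightarrow> 0))
   \<and> (\<exists>C. \<forall>k. err (Suc k) \<le> C * err k ^ (N + 1))
   \<and> (\<forall>k. \<forall>i<n. av (x (Suc k) i - \<xi> i) \<le> th * lam ^ ((N + 1) ^ k) * av (x k i - \<xi> i))
   \<and> (\<forall>k. \<forall>i<n. av (x k i - \<xi> i) \<le> th ^ k * lam ^ (e k) * av (x0 i - \<xi> i))
   \<and> (\<forall>k. \<forall>i<n. av (x (Suc k) i - \<xi> i) \<le> mu ^ (N * (N + 1) ^ k) * av (x k i - \<xi> i))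
   \<and> (\<forall>k. \<forall>i<n. av (x k i - \<xi> i) \<le> mu ^ ((N + 1) ^ k - 1) * av (x0 i - \<xi> i))"
    using WDall Conv C3 C4 C5 C6 C7 by blast
  show ?thesis
    using all unfolding Let_def n_def x_def E_def lam_def th_def mu_def err_def e_def .
qed

end
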